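(* Let $$\tau_1(x)=\begin{cases}\tfrac43x,&0\le x<\tfrac3{20},\\ 16x-\tfrac{11}5,&\tfrac3{20}\le x<\tfrac15,\\ 5x \pmod 1,&\tfrac15\le x\le1,\end{cases}\qquad \tau_2(x)=\begin{cases}16x,&0\le x<\tfrac1{20},\\ \tfrac43x+\tfrac{11}{15},&\tfrac1{20}\le x<\tfrac15,\\ 5x\pmod 1,&\tfrac15\le x\le1.\end{cases}$$ The map $\tau(x)=5x \pmod 1$ satisfies $\tau_1\le\tau\le\tau_2$ and preserves Lebesgue measure. However, there is no Borel measurable function $p:[0,1]\to[0,1]$ such that the position dependent random map $T=(\tau_1,\tau_2;p,1-p)$ preserves Lebesgue measure.
   Context: A position dependent random map $T=(\tau_1,\tau_2;p,1-p)$ with measurable $p:[0,1]\to[0,1]$ moves a point $x$ to $\tau_1(x)$ with probability $p(x)$ and to $\tau_2(x)$ with probability $1-p(x)$. It preserves a probability measure $\mu$ if $\mu(A)=\int\big(p(x)\chi_A(\tau_1(x))+(1-p(x))\chi_A(\tau_2(x))\big)\,d\mu(x)$ for every Borel $A\subseteq[0,1]$; for $\mu$ with density $f$ this is equivalent to $P_{\tau_1}(pf)+P_{\tau_2}((1-p)f)=f$, where $P_{\tau_k}$ is the Frobenius–Perron operator of $\tau_k$. *)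

theory Defs
  imports "HOL-Analysis.Analysis"
begin

definition leb01 :: "real measure" where
  "leb01 = restrict_space lborel {0..1}"

definition tau1 :: "real \<Rightarrow> real" where
  "tau1 x = (if x < 3/20 then 4/3 * x
             else if x < 1/5 then 16 * x - 11/5
             else frac (5 * x))"

definition tau2 :: "real \<Rightarrow> real" where
  "tau2 x = (if x < 1/20 then 16 * x
             else if x < 1/5 then 4/3 * x + 11/15
             else frac (5 * x))"

definition tau :: "real \<Rightarrow> real" where
  "tau x = frac (5 * x)"

definition map_preserves :: "(real \<Rightarrow> real) \<Rightarrow> real measure \<Rightarrow> bool" where
  "map_preserves t mu \<longleftrightarrow>
     (\<forall>A \<in> sets borel. A \<subseteq> {0..1} \<longrightarrow>
        measure mu {x \<in> space mu. t x \<in> A} = measure mu A)"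

definition random_map_preserves ::
  "(real \<Rightarrow> real) \<Rightarrow> (real \<Rightarrow> real) \<Rightarrow> (real \<Rightarrow> real) \<Rightarrow> real measure \<Rightarrow> bool" where
  "random_map_preserves t1 t2 p mu \<longleftrightarrow>
     (\<forall>A \<in> sets borel. A \<subseteq> {0..1} \<longrightarrow>
        measure mu A = (\<integral>x. p x * indicator A (t1 x) + (1 - p x) * indicator A (t2 x) \<partial>mu))"

end

theory Submission
  imports Defs
begin

lemma space_leb01[simp]: "space leb01 = {0..1}"
  by (simp add: leb01_def space_restrict_space)

lemma sets_leb01: "sets leb01 = sets (restrict_space borel {0..1::real})"
  by (simp add: leb01_def sets_restrict_space)

lemma measure_leb01: "S \<subseteq> {0..1} \<Longrightarrow> measure leb01 S = measure lborel S"
  unfolding leb01_def by (rule measure_restrict_space) auto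

lemma fin_leb01: "finite_measure leb01"
proof -
  have "emeasure leb01 (space leb01) = 1"
    by (simp add: leb01_def emeasure_restrict_space)
  then show ?thesis by (intro finite_measureI) simp
qed

lemma integrable_leb01:
  fixes f :: "real \<Rightarrow> real"
  assumes "f \<in> borel_measurable leb01" "\<And>x. x \<in> {0..1} \<Longrightarrow> \<bar>f x\<bar> \<le> B"
  shows "integrable leb01 f"
  using assms by (intro finite_measure.integrable_const_bound[OF fin_leb01, where B=B]) auto

lemma frac_meas[measurable]: "(frac :: real \<Rightarrow> real) \<in> borel_measurable borel"
  unfolding frac_def[abs_def] by measurable

lemma tau_meas[measurable]: "tau \<in> borel_measurable borel"
  unfolding tau_def[abs_def] by measurable
lemma tau1_meas[measurable]: "tau1 \<in> borel_measurable borel"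
  unfolding tau1_def[abs_def] by measurable
lemma tau2_meas[measurable]: "tau2 \<in> borel_measurable borel"
  unfolding tau2_def[abs_def] by measurable

lemma part1: "\<forall>x \<in> {0..1}. tau1 x \<le> tau x \<and> tau x \<le> tau2 x"
proof
  fix x :: real assume x: "x \<in> {0..1}"
  show "tau1 x \<le> tau x \<and> tau x \<le> tau2 x"
  proof (cases "x < 1/5")
    case True
    then have "frac (5*x) = 5*x" using x by (intro frac_eq_id) auto
    then show ?thesis using True x by (auto simp: tau_def tau1_def tau2_def)
  next
    case False then show ?thesis by (auto simp: tau_def tau1_def tau2_def)
  qed
qed

lemma pointwise:
  fixes A :: "real set"
  assumes "A \<subseteq> {0..1}" "x \<noteq> 1"
  shows "indicator {x\<in>{0..1}. tau x \<in> A} x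
     = (\<Sum>k<5. indicator (A \<inter> {0..<1}) (- real k + 5 * x) :: real)"
proof (cases "0 \<le> x \<and> x < 1")
  case False
  then have "x < 0 \<or> x > 1" using assms(2) by auto
  then have "\<And>k. k < (5::nat) \<Longrightarrow> - real k + 5 * x \<notin> {0..<1}" by auto
  then show ?thesis using False assms(2) by (auto simp: indicator_def)
next
  case True
  define j where "j = nat \<lfloor>5*x\<rfloor>"
  have fl: "\<lfloor>5*x\<rfloor> \<ge> 0" "\<lfloor>5*x\<rfloor> < 5" using True by (auto simp: floor_less_iff)
  have jr: "real j = of_int \<lfloor>5*x\<rfloor>" using fl by (simp add: j_def)
  have j5: "j < 5" using fl by (simp add: j_def nat_less_iff)
  have fr: "tau x = - real j + 5 * x" unfolding tau_def frac_def jr by simp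
  have oth: "\<And>k. k \<noteq> j \<Longrightarrow> - real k + 5 * x \<notin> {0..<1}"
  proof
    fix k assume k: "k \<noteq> j" "- real k + 5 * x \<in> {0..<1}"
    then have "\<lfloor>5*x\<rfloor> = int k" by (intro floor_unique) auto
    then show False using k(1) j_def by auto
  qed
  have "(\<Sum>k<5. indicator (A \<inter> {0..<1}) (- real k + 5 * x) :: real)
      = (\<Sum>k<5. if k = j then indicator (A \<inter> {0..<1}) (- real j + 5 * x) else 0)"
    by (rule sum.cong) (auto simp: indicator_def dest: oth)
  also have "\<dots> = indicator (A \<inter> {0..<1}) (- real j + 5 * x)"
    using j5 by simp
  also have "\<dots> = indicator {x\<in>{0..1}. tau x \<in> A} x"
    using True fr frac_lt_1[of "5*x"] frac_ge_0[of "5*x"] unfolding tau_def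
    by (auto simp: indicator_def)
  finally show ?thesis ..
qed

lemma pres_lborel:
  assumes A[measurable]: "A \<in> sets borel" and Asub: "A \<subseteq> {0..1}"
  shows "measure lborel {x\<in>{0..1}. tau x \<in> A} = measure lborel A"
proof -
  define A' where "A' = A \<inter> {0..<1::real}"
  have A'm[measurable]: "A' \<in> sets borel" unfolding A'_def by measurable
  have finA': "emeasure lborel A' < \<infinity>"
  proof -
    have "emeasure lborel A' \<le> emeasure lborel {0..1::real}"
      by (rule emeasure_mono) (auto simp: A'_def)
    then show ?thesis by (simp add: order_le_less_trans)
  qed
  have intA': "integrable lborel (indicator A' :: real \<Rightarrow> real)"
    using finA' by (simp add: integrable_indicator_iff)
  have gk: "integrable lborel (\<lambda>x. indicator A' (- real k + 5 * x) :: real)" for k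
    using lborel_integrable_real_affine[OF intA', of 5 "- real k"] by simp
  have igk: "integral\<^sup>L lborel (\<lambda>x. indicator A' (- real k + 5 * x) :: real) = measure lborel A' / 5" for k
    using lborel_integral_real_affine[of 5 "indicator A' :: real \<Rightarrow> real" "- real k"] by simp
  have B: "{x\<in>{0..1}. tau x \<in> A} \<in> sets borel" by measurable
  have "measure lborel {x\<in>{0..1}. tau x \<in> A} = integral\<^sup>L lborel (indicator {x\<in>{0..1}. tau x \<in> A} :: real \<Rightarrow> real)"
    by simp
  also have "\<dots> = integral\<^sup>L lborel (\<lambda>x. \<Sum>k<5. indicator A' (- real k + 5 * x) :: real)"
    apply (rule integral_cong_AE)
      apply (measurable; fact B)
     apply measurable
    using AE_lborel_singleton[of 1] apply eventually_elim
    using pointwise[OF Asub] by (simp add: A'_def)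
  also have "\<dots> = (\<Sum>k<(5::nat). integral\<^sup>L lborel (\<lambda>x. indicator A' (- real k + 5 * x) :: real))"
    by (rule Bochner_Integration.integral_sum[where I="{..<5}" and M=lborel and f="\<lambda>k x. indicator A' (- real k + 5*x) :: real"]) (rule gk)
  also have "\<dots> = (\<Sum>k<(5::nat). measure lborel A' / 5)"
    by (simp only: igk)
  also have "\<dots> = measure lborel A'" by simp
  also have "\<dots> = integral\<^sup>L lborel (indicator A' :: real \<Rightarrow> real)" by simp
  also have "\<dots> = integral\<^sup>L lborel (indicator A :: real \<Rightarrow> real)"
    apply (rule integral_cong_AE)
      apply measurable
    using AE_lborel_singleton[of 1] apply eventually_elim
    using Asub by (auto simp: A'_def indicator_def)
  also have "\<dots> = measure lborel A" by simp
  finally show ?thesis .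
qed

lemma part2: "map_preserves tau leb01"
  unfolding map_preserves_def
proof (intro ballI impI)
  fix A :: "real set" assume A: "A \<in> sets borel" "A \<subseteq> {0..1}"
  have "measure leb01 {x \<in> space leb01. tau x \<in> A} = measure lborel {x\<in>{0..1}. tau x \<in> A}"
    by (subst measure_leb01) auto
  also have "\<dots> = measure lborel A" using pres_lborel[OF A] .
  also have "\<dots> = measure leb01 A" using measure_leb01[OF A(2)] by simp
  finally show "measure leb01 {x \<in> space leb01. tau x \<in> A} = measure leb01 A" .
qed

lemma meas_leb01: "f \<in> borel_measurable borel \<Longrightarrow> f \<in> borel_measurable leb01"
  unfolding leb01_def
  by (rule measurable_restrict_space1) (simp add: measurable_lborel1)

lemma bound:
  fixes x P :: real
  assumes x: "x \<in> {0..1}" and P: "0 \<le> P" "P \<le> 1"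
  defines "A \<equiv> {1/5..<4/5::real}"
  shows "P * indicator A (tau1 x) + (1 - P) * indicator A (tau2 x)
     \<le> indicator A (tau x) - indicator {1/25..<4/25::real} x + indicator {3/20..<3/16::real} x
        + indicator {1/80..<1/20::real} x"
proof (cases "x < 1/5")
  case True
  then have fr: "tau x = 5 * x" using x unfolding tau_def by (intro frac_eq_id) auto
  have i1: "indicator A (tau1 x) \<le> (indicator {3/20..<3/16::real} x :: real)"
    using True by (auto simp: A_def tau1_def indicator_def)
  have i2: "indicator A (tau2 x) \<le> (indicator {1/80..<1/20::real} x :: real)"
    using True by (auto simp: A_def tau2_def indicator_def)
  have i3: "indicator A (tau x) = (indicator {1/25..<4/25::real} x :: real)"
    using fr by (auto simp: A_def indicator_def)
  have "P * indicator A (tau1 x) \<le> (indicator A (tau1 x) :: real)"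
    using P by (simp add: indicator_def)
  moreover have "(1 - P) * indicator A (tau2 x) \<le> (indicator A (tau2 x) :: real)"
    using P by (simp add: indicator_def)
  ultimately show ?thesis using i1 i2 i3 by linarith
next
  case False
  then have "tau1 x = tau x" "tau2 x = tau x" by (auto simp: tau_def tau1_def tau2_def)
  moreover have "indicator {1/25..<4/25::real} x = (0::real)"
    "indicator {3/20..<3/16::real} x = (0::real)" "indicator {1/80..<1/20::real} x = (0::real)"
    using False by (auto simp: indicator_def)
  ultimately show ?thesis by (simp add: algebra_simps)
qed

lemma part3: "\<not> (\<exists>p :: real \<Rightarrow> real.
            p \<in> borel_measurable (restrict_space borel {0..1})
          \<and> (\<forall>x \<in> {0..1}. 0 \<le> p x \<and> p x \<le> 1)
          \<and> random_map_preserves tau1 tau2 p leb01)"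
proof
  assume "\<exists>p :: real \<Rightarrow> real.
            p \<in> borel_measurable (restrict_space borel {0..1})
          \<and> (\<forall>x \<in> {0..1}. 0 \<le> p x \<and> p x \<le> 1)
          \<and> random_map_preserves tau1 tau2 p leb01"
  then obtain p :: "real \<Rightarrow> real" where pm: "p \<in> borel_measurable (restrict_space borel {0..1})"
    and p01: "\<forall>x \<in> {0..1}. 0 \<le> p x \<and> p x \<le> 1"
    and rm: "random_map_preserves tau1 tau2 p leb01" by blast
  define A where "A = {1/5..<4/5::real}"
  have pm'[measurable]: "p \<in> borel_measurable leb01"
    using pm by (simp add: measurable_cong_sets[OF sets_leb01 refl])
  have t1[measurable]: "tau1 \<in> borel_measurable leb01" by (rule meas_leb01) measurable
  have t2[measurable]: "tau2 \<in> borel_measurable leb01" by (rule meas_leb01) measurable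
  have t[measurable]: "tau \<in> borel_measurable leb01" by (rule meas_leb01) measurable
  have Am[measurable]: "A \<in> sets borel" unfolding A_def by simp
  have ind: "(\<lambda>x. indicator S x :: real) \<in> borel_measurable leb01" if "S \<in> sets borel" for S :: "real set"
    by (rule meas_leb01) (use that in measurable)
  have Ieq: "measure leb01 A = (\<integral>x. p x * indicator A (tau1 x) + (1 - p x) * indicator A (tau2 x) \<partial>leb01)"
  proof -
    have "A \<subseteq> {0..1}" by (auto simp: A_def)
    then show ?thesis using rm Am unfolding random_map_preserves_def by blast
  qed
  define g where "g x = p x * indicator A (tau1 x) + (1 - p x) * indicator A (tau2 x)" for x
  define r :: "real \<Rightarrow> real" where "r x = indicator A (tau x) - indicator {1/25..<4/25::real} x + indicator {3/20..<3/16::real} x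
        + indicator {1/80..<1/20::real} x" for x :: real
  have ig: "integrable leb01 g"
  proof (rule integrable_leb01[where B=1])
    show "g \<in> borel_measurable leb01" unfolding g_def by measurable
    fix x :: real assume "x \<in> {0..1}"
    then show "\<bar>g x\<bar> \<le> 1" using p01 unfolding g_def by (auto simp: indicator_def)
  qed
  have ih: "integrable leb01 (\<lambda>x. indicator A (tau x) :: real)"
  proof (rule integrable_leb01[where B=1])
    show "(\<lambda>x. indicator A (tau x) :: real) \<in> borel_measurable leb01" by (rule meas_leb01) measurable
  qed (auto simp: indicator_def)
  have iS: "integrable leb01 (indicator S :: real \<Rightarrow> real)" if "S \<in> sets borel" for S :: "real set"
  proof (rule integrable_leb01[where B=1])
    show "(indicator S :: real \<Rightarrow> real) \<in> borel_measurable leb01" using ind[OF that] by (simp add: fun_eq_iff)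
  qed (auto simp: indicator_def)
  have intS: "integral\<^sup>L leb01 (indicator {a..<b} :: real \<Rightarrow> real) = b - a"
    if "0 \<le> a" "a \<le> b" "b \<le> 1" for a b :: real
  proof -
    have "{a..<b} \<inter> {0..1} = {a..<b}" using that by auto
    moreover have "{a..<b} \<subseteq> {0..1}" using that by auto
    ultimately show ?thesis using that measure_leb01[of "{a..<b}"] by simp
  qed
  have "integral\<^sup>L leb01 (\<lambda>x. indicator A (tau x) :: real) = integral\<^sup>L leb01 (indicator {x\<in>{0..1}. tau x \<in> A} :: real \<Rightarrow> real)"
    by (rule Bochner_Integration.integral_cong) (auto simp: indicator_def)
  also have "\<dots> = measure lborel {x\<in>{0..1}. tau x \<in> A}"
  proof -
    have "{x\<in>{0..1}. tau x \<in> A} \<inter> {0..1} = {x\<in>{0..1}. tau x \<in> A}" by auto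
    moreover have sub: "{x\<in>{0..1}. tau x \<in> A} \<subseteq> {0..1}" by auto
    ultimately show ?thesis using measure_leb01[OF sub] by simp
  qed
  also have "\<dots> = measure lborel A" by (rule pres_lborel) (auto simp: A_def)
  finally have ih_val: "integral\<^sup>L leb01 (\<lambda>x. indicator A (tau x) :: real) = 3/5"
    by (simp add: A_def)
  have "integral\<^sup>L leb01 g \<le> integral\<^sup>L leb01 r"
  proof (rule integral_mono[OF ig])
    show "integrable leb01 r" unfolding r_def
      by (intro Bochner_Integration.integrable_add Bochner_Integration.integrable_diff ih iS) auto
    fix x assume "x \<in> space leb01"
    then show "g x \<le> r x" unfolding g_def r_def A_def using p01 bound by simp
  qed
  also have "integral\<^sup>L leb01 r = 3/5 - 3/25 + 3/80 + 3/80"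
    unfolding r_def
    apply (subst Bochner_Integration.integral_add, (intro Bochner_Integration.integrable_add Bochner_Integration.integrable_diff ih iS; simp)+)+
    apply (subst Bochner_Integration.integral_diff, (intro ih iS; simp)+)
    apply (simp only: ih_val)
    apply (subst intS, simp, simp, simp)+
    by simp
  finally have "integral\<^sup>L leb01 g \<le> 3/5 - 3/25 + 3/80 + 3/80" .
  moreover have "measure leb01 A = 3/5"
  proof -
    have sub: "A \<subseteq> {0..1}" by (auto simp: A_def)
    show ?thesis using measure_leb01[OF sub] by (simp add: A_def)
  qed
  ultimately show False using Ieq unfolding g_def by simp
qed
theorem mainTheorem6:
  shows "(\<forall>x \<in> {0..1}. tau1 x \<le> tau x \<and> tau x \<le> tau2 x)
    \<and> map_preserves tau leb01
    \<and> \<not> (\<exists>p :: real \<Rightarrow> real.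
            p \<in> borel_measurable (restrict_space borel {0..1})
          \<and> (\<forall>x \<in> {0..1}. 0 \<le> p x \<and> p x \<le> 1)
          \<and> random_map_preserves tau1 tau2 p leb01)"
  using part1 part2 part3 by blast

end
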